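(* Let $q$ be a prime power with $q\equiv1\pmod 4$ and let $P_q=\Gamma(\mathbb{F}_q,S)$ be the Paley graph, where $S$ is the set of nonzero quadratic residues in $\mathbb{F}_q$. Then $\Theta_{\mathrm{lin}}(P_q)=\sqrt q$. In particular, $\Theta_{\mathrm{lin}}(C_5)=\sqrt5$, where $C_5$ is the $5$-cycle (identified with $P_5$).
   Context: For a symmetric set $S\subseteq\mathbb{F}_q\setminus\{0\}$ ($S=-S$), the Cayley graph $\Gamma(\mathbb{F}_q,S)$ has vertex set $\mathbb{F}_q$, with $u\sim v$ iff $u-v\in S$. $G^k$ is the $k$-fold strong product: vertex set $\mathbb{F}_q^k$, distinct vertices adjacent iff in each coordinate they are equal or adjacent in $G$. $\alpha_{\mathrm{lin}}(G^k)$ is the largest size of an independent set of $G^k$ that is a linear subspace of $\mathbb{F}_q^k$, and the linear Shannon capacity is $\Theta_{\mathrm{lin}}(G)=\sup_k\alpha_{\mathrm{lin}}(G^k)^{1/k}$. *)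

theory Defs
  imports Complex_Main
begin

text \<open>Vectors of F^k are represented as functions nat => 'a vanishing outside {..<k}.\<close>
definition vecs :: "nat \<Rightarrow> (nat \<Rightarrow> 'a::zero) set" where
  "vecs k = {v. \<forall>i\<ge>k. v i = 0}"

text \<open>Adjacency in the k-fold strong product of the Cayley graph Gamma(F, S).\<close>
definition strong_adj :: "'a::ab_group_add set \<Rightarrow> nat \<Rightarrow> (nat \<Rightarrow> 'a) \<Rightarrow> (nat \<Rightarrow> 'a) \<Rightarrow> bool" where
  "strong_adj S k u v \<longleftrightarrow> u \<noteq> v \<and> (\<forall>i<k. u i = v i \<or> u i - v i \<in> S)"

definition indep_set :: "'a::ab_group_add set \<Rightarrow> nat \<Rightarrow> (nat \<Rightarrow> 'a) set \<Rightarrow> bool" where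
  "indep_set S k U \<longleftrightarrow> (\<forall>u\<in>U. \<forall>v\<in>U. \<not> strong_adj S k u v)"

definition lin_subspace :: "nat \<Rightarrow> (nat \<Rightarrow> 'a::field) set \<Rightarrow> bool" where
  "lin_subspace k U \<longleftrightarrow> U \<subseteq> vecs k \<and> (\<lambda>i. 0) \<in> U
     \<and> (\<forall>u\<in>U. \<forall>v\<in>U. (\<lambda>i. u i + v i) \<in> U)
     \<and> (\<forall>c. \<forall>u\<in>U. (\<lambda>i. c * u i) \<in> U)"

definition alpha_lin :: "'a::field set \<Rightarrow> nat \<Rightarrow> nat" where
  "alpha_lin S k = Max {card U | U. lin_subspace k U \<and> indep_set S k U}"

definition Theta_lin :: "'a::field set \<Rightarrow> real" where
  "Theta_lin S = (SUP k\<in>{1..}. real (alpha_lin S k) powr (1 / real k))"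

definition paley_set :: "'a::field set" where
  "paley_set = {x. x \<noteq> 0 \<and> (\<exists>y. x = y ^ 2)}"

end

theory Submission
  imports Defs "HOL-Computational_Algebra.Polynomial"
begin

lemma roots_pow_bound:
  fixes c :: "'a::field"
  assumes "n \<ge> 1"
  shows "card {x::'a. x ^ n = c} \<le> n"
proof -
  define p where "p = monom (1::'a) n - [:c:]"
  have cp: "coeff p n = 1" using assms by (cases n) (auto simp: p_def coeff_monom)
  hence "p \<noteq> 0" by auto
  moreover have "degree p \<le> n"
    unfolding p_def by (rule degree_diff_le) (auto simp: degree_monom_le)
  moreover have "{x. poly p x = 0} = {x::'a. x ^ n = c}"
    by (auto simp: p_def poly_monom)
  ultimately show ?thesis using card_poly_roots_bound[of p] by simp
qed

lemma char_card: "of_nat (card (UNIV::'a::{finite,field} set)) = (0::'a)"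
proof -
  have "(\<Sum>s\<in>(UNIV::'a set). s + 1) = (\<Sum>s\<in>UNIV. s)"
    by (rule sum.reindex_bij_witness[where i="\<lambda>s. s - 1" and j="\<lambda>s. s + 1"]) auto
  thus ?thesis by (simp add: sum.distrib)
qed

lemma card_nonzero: "card {s::'a::{finite,field}. s \<noteq> 0} = card (UNIV::'a set) - 1"
proof -
  have "{s::'a. s \<noteq> 0} = UNIV - {0}" by auto
  thus ?thesis by (simp add: card_Diff_subset)
qed

lemma card_ge2: "card (UNIV::'a::{finite,field} set) \<ge> 2"
proof -
  have "{0,1::'a} \<subseteq> UNIV" by auto
  hence "card {0,1::'a} \<le> card (UNIV::'a set)" by (rule card_mono[OF finite_UNIV])
  thus ?thesis by simp
qed

lemma fermat_ff:
  fixes x :: "'a::{finite,field}"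
  assumes "x \<noteq> 0"
  shows "x ^ (card (UNIV::'a set) - 1) = 1"
proof -
  let ?N = "{s::'a. s \<noteq> 0}"
  have "(\<Prod>s\<in>?N. x * s) = (\<Prod>s\<in>?N. s)"
    by (rule prod.reindex_bij_witness[where i="\<lambda>s. s / x" and j="\<lambda>s. x * s"]) (use assms in auto)
  hence "x ^ card ?N * (\<Prod>s\<in>?N. s) = (\<Prod>s\<in>?N. s)"
    by (simp add: prod.distrib)
  moreover have "(\<Prod>s\<in>?N. s) \<noteq> 0" by simp
  ultimately show ?thesis by (simp add: card_nonzero)
qed

lemma power_sum_zero:
  assumes "j < card (UNIV::'a::{finite,field} set) - 1"
  shows "(\<Sum>t\<in>(UNIV::'a set). t ^ j) = 0"
proof (cases "j = 0")
  case True thus ?thesis using char_card by simp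
next
  case False
  have "card {x::'a. x ^ j = 1} \<le> j" using False roots_pow_bound[of j "1::'a"] by simp
  hence lt: "card {x::'a. x ^ j = 1} < card {s::'a. s \<noteq> 0}"
    using assms card_nonzero[where 'a='a] by simp
  have "\<not> {s::'a. s \<noteq> 0} \<subseteq> {x. x ^ j = 1}"
  proof
    assume sub: "{s::'a. s \<noteq> 0} \<subseteq> {x. x ^ j = 1}"
    have "card {s::'a. s \<noteq> 0} \<le> card {x::'a. x ^ j = 1}" by (rule card_mono[OF finite sub])
    with lt show False by simp
  qed
  then obtain g :: 'a where g: "g \<noteq> 0" "g ^ j \<noteq> 1" by auto
  have "(\<Sum>t\<in>(UNIV::'a set). (g * t) ^ j) = (\<Sum>t\<in>UNIV. t ^ j)"
    by (rule sum.reindex_bij_witness[where i="\<lambda>s. s / g" and j="\<lambda>s. g * s"]) (use g in auto)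
  hence "g ^ j * (\<Sum>t\<in>(UNIV::'a set). t ^ j) = (\<Sum>t\<in>UNIV. t ^ j)"
    by (simp add: power_mult_distrib sum_distrib_left)
  hence "(g ^ j - 1) * (\<Sum>t\<in>(UNIV::'a set). t ^ j) = 0" by (simp add: algebra_simps)
  thus ?thesis using g by simp
qed


definition lc :: "(nat \<Rightarrow> 'a::field) set \<Rightarrow> bool" where
  "lc U \<longleftrightarrow> finite U \<and> (\<lambda>i. 0) \<in> U \<and> (\<forall>u\<in>U. \<forall>v\<in>U. (\<lambda>i. u i + v i) \<in> U)
     \<and> (\<forall>c. \<forall>u\<in>U. (\<lambda>i. c * u i) \<in> U)"

lemma lc_comb:
  assumes "lc U" "u \<in> U" "e \<in> U"
  shows "(\<lambda>i. u i + t * e i) \<in> U"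
proof -
  have h: "(\<lambda>i. t * e i) \<in> U" using assms unfolding lc_def by blast
  have "\<forall>u\<in>U. \<forall>v\<in>U. (\<lambda>i. u i + v i) \<in> U" using assms unfolding lc_def by blast
  from this[rule_format, OF assms(2) h] show ?thesis by simp
qed

lemma lc_decomp:
  fixes U :: "(nat \<Rightarrow> 'a::{finite,field}) set"
  assumes U: "lc U" and e: "e \<in> U" "e j \<noteq> 0"
  shows "lc {u\<in>U. u j = 0}"
    and "bij_betw (\<lambda>(w,t). \<lambda>i. w i + t * e i) ({u\<in>U. u j = 0} \<times> UNIV) U"
proof -
  show "lc {u\<in>U. u j = 0}"
    using U unfolding lc_def by auto
  show "bij_betw (\<lambda>(w,t). \<lambda>i. w i + t * e i) ({u\<in>U. u j = 0} \<times> UNIV) U"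
  proof (rule bij_betw_byWitness[where f'="\<lambda>u. ((\<lambda>i. u i + (- (u j / e j)) * e i), u j / e j)"])
    show "\<forall>a\<in>{u \<in> U. u j = 0} \<times> UNIV.
       (\<lambda>u. (\<lambda>i. u i + - (u j / e j) * e i, u j / e j)) ((\<lambda>(w, t) i. w i + t * e i) a) = a"
      using e by (auto simp: fun_eq_iff)
    show "\<forall>a'\<in>U. (\<lambda>(w, t) i. w i + t * e i) ((\<lambda>u. (\<lambda>i. u i + - (u j / e j) * e i, u j / e j)) a') = a'"
      by (auto simp: fun_eq_iff)
    show "(\<lambda>(w, t) i. w i + t * e i) ` ({u \<in> U. u j = 0} \<times> UNIV) \<subseteq> U"
      using lc_comb[OF U _ e(1)] by auto
    show "(\<lambda>u. (\<lambda>i. u i + - (u j / e j) * e i, u j / e j)) ` U \<subseteq> {u \<in> U. u j = 0} \<times> UNIV"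
    proof (rule image_subsetI)
      fix u assume u: "u \<in> U"
      have "(\<lambda>i. u i + (- (u j / e j)) * e i) \<in> U" by (rule lc_comb[OF U u e(1)])
      moreover have "u j + (- (u j / e j)) * e j = 0" using e(2) by (simp add: field_simps)
      ultimately show "(\<lambda>i. u i + - (u j / e j) * e i, u j / e j) \<in> {u \<in> U. u j = 0} \<times> UNIV"
        by simp
    qed
  qed
qed

lemma lc_nonzero:
  fixes U :: "(nat \<Rightarrow> 'a::field) set"
  assumes "lc U" "card U \<ge> 2"
  obtains e j where "e \<in> U" "e j \<noteq> 0"
proof -
  have "\<not> U \<subseteq> {\<lambda>i. 0}"
  proof
    assume "U \<subseteq> {\<lambda>i. 0}"
    hence "card U \<le> card {\<lambda>i::nat. 0::'a}" by (rule card_mono[rotated]) simp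
    thus False using assms by simp
  qed
  then obtain e where "e \<in> U" "e \<noteq> (\<lambda>i. 0)" by auto
  then obtain j where "e j \<noteq> 0" by (auto simp: fun_eq_iff)
  thus ?thesis using that \<open>e \<in> U\<close> by blast
qed

lemma nat_arith_aux: "(a::nat) < q + D \<Longrightarrow> \<not> r < q \<Longrightarrow> r \<le> a \<Longrightarrow> x = a - r \<Longrightarrow> x < D" by arith

lemma vanish:
  fixes U :: "(nat \<Rightarrow> 'a::{finite,field}) set" and c :: "'b \<Rightarrow> nat"
  assumes "lc U" "card U = card (UNIV::'a set) ^ d" "finite A" "card A < d * (card (UNIV::'a set) - 1)"
  shows "(\<Sum>u\<in>U. \<Prod>r\<in>A. u (c r)) = 0"
  using assms
proof (induction d arbitrary: U A)
  case 0 thus ?case by simp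
next
  case (Suc d)
  have q2: "card (UNIV::'a set) \<ge> 2" by (rule card_ge2)
  have "card (UNIV::'a set) \<le> card (UNIV::'a set) ^ Suc d"
    using q2 by (simp add: self_le_power)
  hence "card U \<ge> 2" using Suc.prems(2) q2 by linarith
  then obtain e j where e: "e \<in> U" "e j \<noteq> 0" using lc_nonzero[OF Suc.prems(1)] by blast
  define W where "W = {u\<in>U. u j = 0}"
  have lW: "lc W" using lc_decomp(1)[OF Suc.prems(1) e] by (simp add: W_def)
  have bij: "bij_betw (\<lambda>(w,t). \<lambda>i. w i + t * e i) (W \<times> UNIV) U"
    using lc_decomp(2)[OF Suc.prems(1) e] by (simp add: W_def)
  have fW: "finite W" using lW by (simp add: lc_def)
  have "card U = card W * card (UNIV::'a set)"
    using bij_betw_same_card[OF bij] by (simp add: card_cartesian_product)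
  hence cW: "card W = card (UNIV::'a set) ^ d" using Suc.prems(2) q2 by simp
  have sumU: "\<And>f :: (nat \<Rightarrow> 'a) \<Rightarrow> 'a. (\<Sum>u\<in>U. f u) = (\<Sum>w\<in>W. \<Sum>t\<in>UNIV. f (\<lambda>i. w i + t * e i))"
  proof -
    fix f :: "(nat \<Rightarrow> 'a) \<Rightarrow> 'a"
    have "(\<Sum>u\<in>U. f u) = (\<Sum>x\<in>W \<times> UNIV. f ((\<lambda>(w,t). \<lambda>i. w i + t * e i) x))"
      by (rule sum.reindex_bij_betw[OF bij, symmetric])
    also have "\<dots> = (\<Sum>w\<in>W. \<Sum>t\<in>UNIV. f (\<lambda>i. w i + t * e i))"
      by (simp add: sum.cartesian_product split_def)
    finally show "(\<Sum>u\<in>U. f u) = (\<Sum>w\<in>W. \<Sum>t\<in>UNIV. f (\<lambda>i. w i + t * e i))" .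
  qed
  have pa: "\<And>w t. (\<Prod>r\<in>A. w (c r) + t * e (c r)) =
      (\<Sum>R\<in>Pow A. (\<Prod>r\<in>R. t * e (c r)) * (\<Prod>r\<in>A-R. w (c r)))"
  proof -
    fix w :: "nat \<Rightarrow> 'a" and t :: 'a
    have "(\<Prod>r\<in>A. w (c r) + t * e (c r)) = (\<Prod>r\<in>A. t * e (c r) + w (c r))"
      by (simp add: add.commute)
    also have "\<dots> = (\<Sum>R\<in>Pow A. (\<Prod>r\<in>R. t * e (c r)) * (\<Prod>r\<in>A-R. w (c r)))"
      by (rule prod_add[OF Suc.prems(3)])
    finally show "?thesis w t" .
  qed
  have "(\<Sum>u\<in>U. \<Prod>r\<in>A. u (c r)) =
      (\<Sum>w\<in>W. \<Sum>t\<in>UNIV. \<Sum>R\<in>Pow A. (\<Prod>r\<in>R. t * e (c r)) * (\<Prod>r\<in>A-R. w (c r)))"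
    by (simp add: sumU pa)
  also have "\<dots> = (\<Sum>w\<in>W. \<Sum>R\<in>Pow A. \<Sum>t\<in>UNIV. (\<Prod>r\<in>R. t * e (c r)) * (\<Prod>r\<in>A-R. w (c r)))"
    by (rule sum.cong[OF refl], rule sum.swap)
  also have "\<dots> = (\<Sum>R\<in>Pow A. \<Sum>w\<in>W. \<Sum>t\<in>UNIV. (\<Prod>r\<in>R. t * e (c r)) * (\<Prod>r\<in>A-R. w (c r)))"
    by (rule sum.swap)
  also have "\<dots> = (\<Sum>R\<in>Pow A. (\<Prod>r\<in>R. e (c r)) * (\<Sum>t\<in>UNIV. t ^ card R) * (\<Sum>w\<in>W. \<Prod>r\<in>A-R. w (c r)))"
    apply (rule sum.cong, simp)
    apply (simp add: prod.distrib sum_distrib_left sum_distrib_right mult_ac)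
    apply (rule sum.swap)
    done
  also have "\<dots> = 0"
  proof (rule sum.neutral, rule ballI)
    fix R assume R: "R \<in> Pow A"
    show "(\<Prod>r\<in>R. e (c r)) * (\<Sum>t\<in>UNIV. t ^ card R) * (\<Sum>w\<in>W. \<Prod>r\<in>A-R. w (c r)) = 0"
    proof (cases "card R < card (UNIV::'a set) - 1")
      case True thus ?thesis by (simp add: power_sum_zero)
    next
      case False
      have "card (A - R) = card A - card R"
        using R Suc.prems(3) by (auto intro: card_Diff_subset finite_subset)
      moreover have "card A < (card (UNIV::'a set) - 1) + d * (card (UNIV::'a set) - 1)"
        using Suc.prems(4) by simp
      moreover have "card R \<le> card A" using R Suc.prems(3) by (auto intro: card_mono)
      ultimately have "card (A - R) < d * (card (UNIV::'a set) - 1)" using False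
        by (metis nat_arith_aux)
      hence "(\<Sum>w\<in>W. \<Prod>r\<in>A-R. w (c r)) = 0"
        using Suc.IH[OF lW cW] Suc.prems(3) by simp
      thus ?thesis by simp
    qed
  qed
  finally show ?case .
qed


lemma lc_card_pow:
  fixes U :: "(nat \<Rightarrow> 'a::{finite,field}) set"
  assumes "lc U"
  shows "\<exists>d. card U = card (UNIV::'a set) ^ d"
  using assms
proof (induction "card U" arbitrary: U rule: less_induct)
  case (less U)
  show ?case
  proof (cases "card U \<ge> 2")
    case False
    have "(\<lambda>i. 0) \<in> U" "finite U" using less.prems by (auto simp: lc_def)
    hence "card U \<noteq> 0" by auto
    hence "card U = 1" using False by linarith
    thus ?thesis by (metis power_0)
  next
    case True
    then obtain e j where e: "e \<in> U" "e j \<noteq> 0" using lc_nonzero[OF less.prems] by blast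
    define W where "W = {u\<in>U. u j = 0}"
    have lW: "lc W" using lc_decomp(1)[OF less.prems e] by (simp add: W_def)
    have bij: "bij_betw (\<lambda>(w,t). \<lambda>i. w i + t * e i) (W \<times> UNIV) U"
      using lc_decomp(2)[OF less.prems e] by (simp add: W_def)
    have cU: "card U = card W * card (UNIV::'a set)"
      using bij_betw_same_card[OF bij] by (simp add: card_cartesian_product)
    have "card W > 0" using lW by (auto simp: lc_def card_gt_0_iff)
    hence "card W < card U" using cU card_ge2[where 'a='a] by simp
    then obtain d where "card W = card (UNIV::'a set) ^ d" using less.hyps lW by blast
    hence "card U = card (UNIV::'a set) ^ Suc d" using cU by simp
    thus ?thesis by blast
  qed
qed

definition sqs :: "'a::field set" where "sqs = (\<lambda>y. y ^ 2) ` {s. s \<noteq> 0}"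

lemma paley_sqs: "paley_set = sqs"
  unfolding paley_set_def sqs_def by auto

lemma sqs_count: "card {s::'a::{finite,field}. s \<noteq> 0} \<le> 2 * card (sqs::'a set)"
proof -
  have "{s::'a. s \<noteq> 0} \<subseteq> (\<Union>c\<in>sqs. {y. y ^ 2 = c})" unfolding sqs_def by auto
  hence "card {s::'a. s \<noteq> 0} \<le> card (\<Union>c\<in>(sqs::'a set). {y. y ^ 2 = c})"
    by (rule card_mono[rotated]) simp
  also have "\<dots> \<le> (\<Sum>c\<in>(sqs::'a set). card {y. y ^ 2 = c})" by (rule card_UN_le) simp
  also have "\<dots> \<le> (\<Sum>c\<in>(sqs::'a set). 2)"
    by (rule sum_mono) (rule roots_pow_bound, simp)
  finally show ?thesis by simp
qed

lemma sqs_roots: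
  assumes "card (UNIV::'a::{finite,field} set) - 1 = 2 * m"
  shows "(sqs::'a set) \<subseteq> {x. x ^ m = 1}"
proof
  fix x :: 'a assume "x \<in> sqs"
  then obtain y where y: "y \<noteq> 0" "x = y ^ 2" unfolding sqs_def by auto
  have "x ^ m = y ^ (2 * m)" using y by (simp add: power_mult)
  also have "\<dots> = 1" using fermat_ff[OF y(1)] assms by simp
  finally show "x \<in> {x. x ^ m = 1}" by simp
qed

lemma euler_nonsq:
  assumes m: "card (UNIV::'a::{finite,field} set) - 1 = 2 * m" "m \<ge> 1"
    and x: "(x::'a) \<noteq> 0" "x \<notin> sqs"
  shows "x ^ m = -1"
proof -
  have "(x ^ m) ^ 2 = 1" using fermat_ff[OF x(1)] m by (simp add: power_mult[symmetric] mult.commute)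
  hence h: "x ^ m = 1 \<or> x ^ m = -1" by (simp add: power2_eq_1_iff)
  have "x ^ m \<noteq> 1"
  proof
    assume "x ^ m = 1"
    hence sub: "insert x sqs \<subseteq> {x::'a. x ^ m = 1}" using sqs_roots[OF m(1)] by auto
    have "card (insert x (sqs::'a set)) \<le> m"
      using card_mono[OF _ sub] roots_pow_bound[OF m(2), of "1::'a"] by simp
    hence "card (sqs::'a set) + 1 \<le> m" using x(2) by simp
    moreover have "2 * m \<le> 2 * card (sqs::'a set)" using sqs_count[where 'a='a] m card_nonzero[where 'a='a] by simp
    ultimately show False by simp
  qed
  thus ?thesis using h by simp
qed

lemma sqs_card_le:
  assumes m: "card (UNIV::'a::{finite,field} set) - 1 = 2 * m" "m \<ge> 1"
  shows "card (sqs::'a set) \<le> m"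
  using card_mono[OF _ sqs_roots[OF m(1)]] roots_pow_bound[OF m(2), of "1::'a"] by simp

lemma finite_vecs: "finite (vecs k :: (nat \<Rightarrow> 'a::{finite,zero}) set)"
proof -
  let ?f = "\<lambda>xs i. if i < k then xs ! i else (0::'a)"
  have "vecs k \<subseteq> ?f ` {xs. set xs \<subseteq> UNIV \<and> length xs = k}"
  proof
    fix v :: "nat \<Rightarrow> 'a" assume v: "v \<in> vecs k"
    have "v = ?f (map v [0..<k])"
    proof
      fix i show "v i = ?f (map v [0..<k]) i" using v by (simp add: vecs_def)
    qed
    moreover have "map v [0..<k] \<in> {xs. set xs \<subseteq> UNIV \<and> length xs = k}" by simp
    ultimately show "v \<in> ?f ` {xs. set xs \<subseteq> UNIV \<and> length xs = k}" by (rule image_eqI)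
  qed
  moreover have "finite {xs::'a list. set xs \<subseteq> UNIV \<and> length xs = k}"
    by (rule finite_lists_length_eq) simp
  ultimately show ?thesis by (rule finite_subset[OF _ finite_imageI])
qed

lemma lin_lc: "lin_subspace k (U :: (nat \<Rightarrow> 'a::{finite,field}) set) \<Longrightarrow> lc U"
  unfolding lin_subspace_def lc_def using finite_vecs finite_subset by blast

lemma dim_bound:
  fixes U :: "(nat \<Rightarrow> 'a::{finite,field}) set"
  assumes q: "card (UNIV::'a set) mod 4 = 1"
    and U: "lin_subspace k U" "indep_set (paley_set::'a set) k U" "card U = card (UNIV::'a set) ^ d"
  shows "2 * d \<le> k"
proof (rule ccontr)
  assume kd: "\<not> 2 * d \<le> k"
  define q where "q = card (UNIV::'a set)"
  define m where "m = (q - 1) div 2"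
  have q2: "q \<ge> 2" using card_ge2[where 'a='a] by (simp add: q_def)
  have qm: "q - 1 = 2 * m" using q q2 unfolding m_def q_def[symmetric] by presburger
  have m1: "m \<ge> 1" using q q2 unfolding m_def q_def[symmetric] by presburger
  have lU: "lc U" by (rule lin_lc[OF U(1)])
  hence fU: "finite U" and zU: "(\<lambda>i. 0) \<in> U" by (auto simp: lc_def)
  define F where "F = (\<lambda>u::nat \<Rightarrow> 'a. \<Prod>i<k. 1 + u i ^ m)"
  have F0: "\<And>u. u \<in> U - {\<lambda>i. 0} \<Longrightarrow> F u = 0"
  proof -
    fix u assume u: "u \<in> U - {\<lambda>i. 0}"
    have "\<not> strong_adj paley_set k u (\<lambda>i. 0)"
      using U(2) u zU unfolding indep_set_def by blast
    then obtain i where i: "i < k" "u i \<noteq> 0" "u i \<notin> paley_set"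
      using u unfolding strong_adj_def by auto
    have "u i ^ m = -1" using euler_nonsq[OF qm[unfolded q_def] m1 i(2)] i(3) paley_sqs by blast
    hence "1 + u i ^ m = 0" by simp
    thus "F u = 0" unfolding F_def using i(1) by (intro prod_zero) auto
  qed
  have "(\<Sum>u\<in>U. F u) = F (\<lambda>i. 0) + (\<Sum>u\<in>U - {\<lambda>i. 0}. F u)"
    using fU zU by (simp add: sum.remove)
  also have "\<dots> = 1"
  proof -
    have "(\<Sum>u\<in>U - {\<lambda>i. 0}. F u) = 0" by (rule sum.neutral) (use F0 in blast)
    moreover have "F (\<lambda>i. 0) = 1" using m1 by (simp add: F_def zero_power)
    ultimately show ?thesis by simp
  qed
  finally have s1: "(\<Sum>u\<in>U. F u) = 1" .
  have Fexp: "\<And>u. F u = (\<Sum>X\<in>Pow {..<k}. \<Prod>p\<in>({..<k} - X) \<times> {..<m}. u (fst p))"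
  proof -
    fix u :: "nat \<Rightarrow> 'a"
    have "F u = (\<Sum>X\<in>Pow {..<k}. (\<Prod>i\<in>X. 1) * (\<Prod>i\<in>{..<k} - X. u i ^ m))"
      unfolding F_def by (rule prod_add) simp
    also have "\<dots> = (\<Sum>X\<in>Pow {..<k}. \<Prod>p\<in>({..<k} - X) \<times> {..<m}. u (fst p))"
    proof (rule sum.cong[OF refl])
      fix X
      have "(\<Prod>p\<in>({..<k} - X) \<times> {..<m}. u (fst p)) = (\<Prod>i\<in>{..<k} - X. \<Prod>j\<in>{..<m}. u i)"
        by (subst prod.cartesian_product) (simp add: split_def)
      thus "(\<Prod>i\<in>X. 1) * (\<Prod>i\<in>{..<k} - X. u i ^ m) = (\<Prod>p\<in>({..<k} - X) \<times> {..<m}. u (fst p))"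
        by simp
    qed
    finally show "?thesis u" .
  qed
  have "(\<Sum>u\<in>U. F u) = (\<Sum>u\<in>U. \<Sum>X\<in>Pow {..<k}. \<Prod>p\<in>({..<k} - X) \<times> {..<m}. u (fst p))"
    by (simp add: Fexp)
  also have "\<dots> = (\<Sum>X\<in>Pow {..<k}. \<Sum>u\<in>U. \<Prod>p\<in>({..<k} - X) \<times> {..<m}. u (fst p))"
    by (rule sum.swap)
  also have "\<dots> = 0"
  proof (rule sum.neutral, rule ballI)
    fix X assume X: "X \<in> Pow {..<k}"
    have "card (({..<k} - X) \<times> {..<m}) = card ({..<k} - X) * m" by (simp add: card_cartesian_product)
    also have "\<dots> \<le> k * m" by (rule mult_right_mono) (auto intro: card_mono[of "{..<k}", simplified])
    also have "\<dots> < d * (q - 1)" using kd m1 qm by simp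
    finally have "card (({..<k} - X) \<times> {..<m}) < d * (card (UNIV::'a set) - 1)" by (simp add: q_def)
    thus "(\<Sum>u\<in>U. \<Prod>p\<in>({..<k} - X) \<times> {..<m}. u (fst p)) = 0"
      by (intro vanish[OF lU U(3)]) auto
  qed
  finally show False using s1 by simp
qed


lemma alpha_props:
  fixes S :: "'a::{finite,field} set"
  shows "\<exists>U. lin_subspace k U \<and> indep_set S k U \<and> card U = alpha_lin S k"
    and "lin_subspace k U \<Longrightarrow> indep_set S k U \<Longrightarrow> card U \<le> alpha_lin S k"
proof -
  let ?C = "{card U | U. lin_subspace k U \<and> indep_set S k (U :: (nat \<Rightarrow> 'a) set)}"
  have "?C \<subseteq> {..card (vecs k :: (nat \<Rightarrow> 'a) set)}"
    by (auto simp: lin_subspace_def intro!: card_mono finite_vecs)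
  hence fin: "finite ?C" by (rule finite_subset) simp
  have "lin_subspace k {\<lambda>i. 0::'a}" by (simp add: lin_subspace_def vecs_def)
  moreover have "indep_set S k {\<lambda>i. 0::'a}" by (simp add: indep_set_def strong_adj_def)
  ultimately have ne: "?C \<noteq> {}" by blast
  show "\<exists>U. lin_subspace k U \<and> indep_set S k U \<and> card U = alpha_lin S k"
    using Max_in[OF fin ne] unfolding alpha_lin_def by auto
  show "lin_subspace k U \<Longrightarrow> indep_set S k U \<Longrightarrow> card U \<le> alpha_lin S k"
    unfolding alpha_lin_def by (rule Max_ge[OF fin]) blast
qed

lemma upper:
  fixes S :: "'a::{finite,field} set"
  assumes q: "card (UNIV::'a set) mod 4 = 1" and S: "S = paley_set" and k: "k \<ge> 1"
  shows "real (alpha_lin S k) powr (1 / real k) \<le> sqrt (real (card (UNIV::'a set)))"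
proof -
  obtain U where U: "lin_subspace k U" "indep_set S k U" "card U = alpha_lin S k"
    using alpha_props(1) by blast
  obtain d where d: "card U = card (UNIV::'a set) ^ d" using lc_card_pow[OF lin_lc[OF U(1)]] by blast
  have dk: "2 * d \<le> k" using dim_bound[OF q U(1) U(2)[unfolded S] d] .
  define Q where "Q = real (card (UNIV::'a set))"
  have Q1: "Q \<ge> 1" using card_ge2[where 'a='a] by (simp add: Q_def)
  have "real (alpha_lin S k) = Q ^ d" using U(3) d by (simp add: Q_def)
  also have "\<dots> = Q powr real d" using Q1 by (simp add: powr_realpow)
  finally have "real (alpha_lin S k) powr (1 / real k) = Q powr (real d * (1 / real k))"
    by (simp add: powr_powr)
  also have "\<dots> \<le> Q powr (1/2)"
  proof (rule powr_mono[OF _ Q1])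
    have "real (2 * d) \<le> real k" using dk by linarith
    thus "real d * (1 / real k) \<le> 1 / 2" using k by (simp add: field_simps)
  qed
  also have "\<dots> = sqrt Q" using Q1 by (simp add: powr_half_sqrt)
  finally show ?thesis by (simp add: Q_def)
qed

lemma lower:
  fixes S :: "'a::{finite,field} set"
  assumes q: "card (UNIV::'a set) mod 4 = 1" and S: "S = paley_set"
  shows "card (UNIV::'a set) \<le> alpha_lin S 2"
proof -
  define q where "q = card (UNIV::'a set)"
  define m where "m = (q - 1) div 2"
  have q2: "q \<ge> 2" using card_ge2[where 'a='a] by (simp add: q_def)
  have qm: "card (UNIV::'a set) - 1 = 2 * m" using q q2 unfolding m_def q_def by presburger
  have m1: "m \<ge> 1" using q q2 unfolding m_def q_def by presburger
  have "card (sqs::'a set) < card {s::'a. s \<noteq> 0}"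
    using sqs_card_le[OF qm m1] card_nonzero[where 'a='a] qm m1 by simp
  hence "\<not> {s::'a. s \<noteq> 0} \<subseteq> sqs" using card_mono[of "sqs::'a set"] by (meson finite leD)
  then obtain g :: 'a where g: "g \<noteq> 0" "g \<notin> paley_set" using paley_sqs by auto
  define f where "f = (\<lambda>(x::'a) (i::nat). if i = 0 then x else if i = 1 then g * x else 0)"
  have lin: "lin_subspace 2 (range f)"
    unfolding lin_subspace_def
  proof (intro conjI ballI allI)
    show "range f \<subseteq> vecs 2" by (auto simp: f_def vecs_def)
    show "(\<lambda>i. 0) \<in> range f" by (rule range_eqI[where x=0]) (simp add: f_def fun_eq_iff)
    fix u v assume "u \<in> range f" "v \<in> range f"
    then obtain x y where "u = f x" "v = f y" by auto
    thus "(\<lambda>i. u i + v i) \<in> range f"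
      by (intro range_eqI[where x="x + y"]) (simp add: f_def fun_eq_iff algebra_simps)
  next
    fix c u assume "u \<in> range f"
    then obtain x where "u = f x" by auto
    thus "(\<lambda>i. c * u i) \<in> range f"
      by (intro range_eqI[where x="c * x"]) (simp add: f_def fun_eq_iff algebra_simps)
  qed
  have ind: "indep_set S 2 (range f)"
    unfolding indep_set_def strong_adj_def
  proof (intro ballI notI)
    fix u v assume "u \<in> range f" "v \<in> range f"
      and adj: "u \<noteq> v \<and> (\<forall>i<2. u i = v i \<or> u i - v i \<in> S)"
    then obtain x y where uv: "u = f x" "v = f y" by auto
    have xy: "x \<noteq> y" using adj uv by auto
    have a0: "x - y \<in> paley_set" using adj uv xy S by (auto simp: f_def dest: spec[of _ 0])
    have a1: "g * x - g * y \<in> paley_set \<or> g * x = g * y"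
      using adj uv S by (auto simp: f_def dest: spec[of _ 1])
    have "g * x \<noteq> g * y" using g xy by simp
    with a1 have "g * (x - y) \<in> paley_set" by (simp add: algebra_simps)
    then obtain r where r: "g * (x - y) = r ^ 2" by (auto simp: paley_set_def)
    from a0 obtain s where s: "x - y = s ^ 2" by (auto simp: paley_set_def)
    have "s \<noteq> 0" using s xy by auto
    hence "g = (r / s) ^ 2" using r s by (simp add: field_simps power2_eq_square)
    thus False using g by (auto simp: paley_set_def)
  qed
  have "inj f" by (rule injI) (simp add: f_def fun_eq_iff, metis)
  hence "card (range f) = card (UNIV::'a set)" by (simp add: card_image)
  thus ?thesis using alpha_props(2)[OF lin ind] by simp
qed

lemma thetaA:
  assumes q: "card (UNIV::'a::{finite,field} set) mod 4 = 1"
  shows "Theta_lin (paley_set :: 'a set) = sqrt (real (card (UNIV :: 'a set)))"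
proof -
  let ?f = "\<lambda>k. real (alpha_lin (paley_set::'a set) k) powr (1 / real k)"
  have up: "\<And>k. k \<in> {1..} \<Longrightarrow> ?f k \<le> sqrt (real (card (UNIV :: 'a set)))"
    using upper[OF q refl] by simp
  have "(SUP k\<in>{1..}. ?f k) \<le> sqrt (real (card (UNIV :: 'a set)))"
    by (rule cSUP_least) (use up in auto)
  moreover have "sqrt (real (card (UNIV :: 'a set))) \<le> (SUP k\<in>{1..}. ?f k)"
  proof (rule cSUP_upper2)
    show "bdd_above (?f ` {1..})" using up by (intro bdd_aboveI2) 
    show "(2::nat) \<in> {1..}" by simp
    have "real (card (UNIV :: 'a set)) powr (1 / 2) \<le> real (alpha_lin (paley_set::'a set) 2) powr (1/2)"
      using lower[OF q refl] by (intro powr_mono2) auto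
    thus "sqrt (real (card (UNIV :: 'a set))) \<le> ?f 2" by (simp add: powr_half_sqrt)
  qed
  ultimately show ?thesis unfolding Theta_lin_def by (rule antisym)
qed

lemma paley5:
  assumes "card (UNIV::'b::{finite,field} set) = 5"
  shows "(paley_set :: 'b set) = {1, -1}"
proof -
  have qm: "card (UNIV::'b set) - 1 = 2 * 2" using assms by simp
  have "(sqs::'b set) \<subseteq> {x. x ^ 2 = 1}" by (rule sqs_roots[OF qm])
  also have "{x::'b. x ^ 2 = 1} = {1, -1}" by (auto simp: power2_eq_1_iff)
  finally have sub: "(sqs::'b set) \<subseteq> {1, -1}" .
  have "card {1, -1::'b} \<le> 2" by (simp add: card_insert_le_m1)
  moreover have "4 \<le> 2 * card (sqs::'b set)" using sqs_count[where 'a='b] card_nonzero[where 'a='b] assms by simp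
  ultimately have "card {1, -1::'b} \<le> card (sqs::'b set)" by simp
  hence "(sqs::'b set) = {1, -1}" using card_seteq[OF _ sub] by simp
  thus ?thesis by (simp add: paley_sqs)
qed

theorem mainTheorem5:
  shows "(card (UNIV :: 'a::{finite,field} set) mod 4 = 1 \<longrightarrow>
            Theta_lin (paley_set :: 'a set) = sqrt (real (card (UNIV :: 'a set))))
       \<and> (card (UNIV :: 'b::{finite,field} set) = 5 \<longrightarrow>
            Theta_lin ({1, -1} :: 'b set) = sqrt 5)"
proof (intro conjI impI)
  show "card (UNIV :: 'a set) mod 4 = 1 \<Longrightarrow> Theta_lin (paley_set :: 'a set) = sqrt (real (card (UNIV :: 'a set)))"
    by (rule thetaA)
  assume b: "card (UNIV :: 'b set) = 5"
  have "Theta_lin (paley_set :: 'b set) = sqrt (real (card (UNIV :: 'b set)))"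
    by (rule thetaA) (simp add: b)
  thus "Theta_lin ({1, -1} :: 'b set) = sqrt 5" using paley5[OF b] b by simp
qed

end
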